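(* Every LTL-satisfiable $\mathrm{THT}^{1}(\mathsf X,\mathsf R)$ formula has a minimal LTL model. Likewise, every LTL-satisfiable $\mathrm{THT}_1$ formula has a minimal LTL model.
   Context: Fix a finite set $P$ of atomic propositions. Formulas over $P$: $\varphi ::= p \mid \bot \mid \varphi\vee\varphi \mid \varphi\wedge\varphi \mid \varphi\rightarrow\varphi \mid \mathsf{X}\varphi \mid \varphi\,\mathsf{U}\,\varphi \mid \varphi\,\mathsf{R}\,\varphi$, with $\neg\varphi:=\varphi\rightarrow\bot$, and the modalities $\mathsf F\varphi$ and $\mathsf G\varphi$ with the meaning of $\top\mathsf U\varphi$ and $\bot\mathsf R\varphi$. An LTL interpretation is an infinite word $T$ over $2^P$. $T\models_{LTL}\varphi$ denotes standard LTL satisfaction at position $0$ (classical implication). A formula is LTL-satisfiable if it has an LTL model. For LTL interpretations, $H\sqsubset T$ means $H(i)\subseteq T(i)$ for all $i$ and $H\ne T$. A minimal LTL model of $\varphi$ is an LTL model $T$ of $\varphi$ such that no $H\sqsubset T$ satisfies $H\models_{LTL}\varphi$. $\mathrm{THT}^{1}(\mathsf X,\mathsf R)$ is the set of formulas whose only temporal modalities are $\mathsf X$ and $\mathsf R$ and whose implication height (maximal nesting of $\rightarrow$, with negation counting as an implication) is at most $1$. $\mathrm{THT}_1$ is the set of formulas (all modalities $\mathsf X,\mathsf U,\mathsf R,\mathsf F,\mathsf G$ allowed) with no nesting of temporal modalities. *)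

theory Defs
  imports Main
begin

text \<open>Temporal formulas over atoms of type 'a (the finite set P is the finite type 'a).\<close>
datatype 'a tform =
    Atom 'a
  | Bot
  | Or "'a tform" "'a tform"
  | And "'a tform" "'a tform"
  | Imp "'a tform" "'a tform"
  | Next "'a tform"
  | Until "'a tform" "'a tform"
  | Release "'a tform" "'a tform"

definition Neg :: "'a tform \<Rightarrow> 'a tform" where "Neg \<phi> = Imp \<phi> Bot"
definition Top :: "'a tform" where "Top = Imp Bot Bot"
definition Fin :: "'a tform \<Rightarrow> 'a tform" where "Fin \<phi> = Until Top \<phi>"
definition Glob :: "'a tform \<Rightarrow> 'a tform" where "Glob \<phi> = Release Bot \<phi>"

type_synonym 'a interp = "nat \<Rightarrow> 'a set"

fun ltl_sat :: "'a interp \<Rightarrow> nat \<Rightarrow> 'a tform \<Rightarrow> bool" where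
  "ltl_sat T i (Atom p) = (p \<in> T i)"
| "ltl_sat T i Bot = False"
| "ltl_sat T i (Or \<phi> \<psi>) = (ltl_sat T i \<phi> \<or> ltl_sat T i \<psi>)"
| "ltl_sat T i (And \<phi> \<psi>) = (ltl_sat T i \<phi> \<and> ltl_sat T i \<psi>)"
| "ltl_sat T i (Imp \<phi> \<psi>) = (ltl_sat T i \<phi> \<longrightarrow> ltl_sat T i \<psi>)"
| "ltl_sat T i (Next \<phi>) = ltl_sat T (Suc i) \<phi>"
| "ltl_sat T i (Until \<phi> \<psi>) =
     (\<exists>j\<ge>i. ltl_sat T j \<psi> \<and> (\<forall>k. i \<le> k \<and> k < j \<longrightarrow> ltl_sat T k \<phi>))"
| "ltl_sat T i (Release \<phi> \<psi>) =
     (\<forall>j\<ge>i. ltl_sat T j \<psi> \<or> (\<exists>k. i \<le> k \<and> k < j \<and> ltl_sat T k \<phi>))"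

definition ltl_model :: "'a interp \<Rightarrow> 'a tform \<Rightarrow> bool" where
  "ltl_model T \<phi> = ltl_sat T 0 \<phi>"

definition ltl_satisfiable :: "'a tform \<Rightarrow> bool" where
  "ltl_satisfiable \<phi> = (\<exists>T. ltl_model T \<phi>)"

definition strictly_below :: "'a interp \<Rightarrow> 'a interp \<Rightarrow> bool" where
  "strictly_below H T = ((\<forall>i. H i \<subseteq> T i) \<and> H \<noteq> T)"

definition minimal_ltl_model :: "'a interp \<Rightarrow> 'a tform \<Rightarrow> bool" where
  "minimal_ltl_model T \<phi> =
     (ltl_model T \<phi> \<and> \<not> (\<exists>H. strictly_below H T \<and> ltl_model H \<phi>))"

text \<open>Implication height (negation counts as an implication, since Neg is Imp _ Bot).\<close>
fun imp_height :: "'a tform \<Rightarrow> nat" where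
  "imp_height (Atom p) = 0"
| "imp_height Bot = 0"
| "imp_height (Or \<phi> \<psi>) = max (imp_height \<phi>) (imp_height \<psi>)"
| "imp_height (And \<phi> \<psi>) = max (imp_height \<phi>) (imp_height \<psi>)"
| "imp_height (Imp \<phi> \<psi>) = Suc (max (imp_height \<phi>) (imp_height \<psi>))"
| "imp_height (Next \<phi>) = imp_height \<phi>"
| "imp_height (Until \<phi> \<psi>) = max (imp_height \<phi>) (imp_height \<psi>)"
| "imp_height (Release \<phi> \<psi>) = max (imp_height \<phi>) (imp_height \<psi>)"

fun only_X_R :: "'a tform \<Rightarrow> bool" where
  "only_X_R (Atom p) = True"
| "only_X_R Bot = True"
| "only_X_R (Or \<phi> \<psi>) = (only_X_R \<phi> \<and> only_X_R \<psi>)"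
| "only_X_R (And \<phi> \<psi>) = (only_X_R \<phi> \<and> only_X_R \<psi>)"
| "only_X_R (Imp \<phi> \<psi>) = (only_X_R \<phi> \<and> only_X_R \<psi>)"
| "only_X_R (Next \<phi>) = only_X_R \<phi>"
| "only_X_R (Until \<phi> \<psi>) = False"
| "only_X_R (Release \<phi> \<psi>) = (only_X_R \<phi> \<and> only_X_R \<psi>)"

definition THT1_XR :: "'a tform set" where
  "THT1_XR = {\<phi>. only_X_R \<phi> \<and> imp_height \<phi> \<le> 1}"

fun temp_depth :: "'a tform \<Rightarrow> nat" where
  "temp_depth (Atom p) = 0"
| "temp_depth Bot = 0"
| "temp_depth (Or \<phi> \<psi>) = max (temp_depth \<phi>) (temp_depth \<psi>)"
| "temp_depth (And \<phi> \<psi>) = max (temp_depth \<phi>) (temp_depth \<psi>)"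
| "temp_depth (Imp \<phi> \<psi>) = max (temp_depth \<phi>) (temp_depth \<psi>)"
| "temp_depth (Next \<phi>) = Suc (temp_depth \<phi>)"
| "temp_depth (Until \<phi> \<psi>) = Suc (max (temp_depth \<phi>) (temp_depth \<psi>))"
| "temp_depth (Release \<phi> \<psi>) = Suc (max (temp_depth \<phi>) (temp_depth \<psi>))"

definition THT_1 :: "'a tform set" where
  "THT_1 = {\<phi>. temp_depth \<phi> \<le> 1}"

end

theory Submission
  imports Defs
begin


lemma mono0: "imp_height \<psi> = 0 \<Longrightarrow> (\<forall>i. H i \<subseteq> G i) \<Longrightarrow> ltl_sat H i \<psi> \<Longrightarrow> ltl_sat G i \<psi>"
proof (induction \<psi> arbitrary: i)
  case (Until \<psi>1 \<psi>2)
  have I1: "\<And>k. ltl_sat H k \<psi>1 \<Longrightarrow> ltl_sat G k \<psi>1" and I2: "\<And>k. ltl_sat H k \<psi>2 \<Longrightarrow> ltl_sat G k \<psi>2"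
    using Until by auto
  show ?case using Until.prems(3) I1 I2 by (simp only: ltl_sat.simps) blast
next
  case (Release \<psi>1 \<psi>2)
  have I1: "\<And>k. ltl_sat H k \<psi>1 \<Longrightarrow> ltl_sat G k \<psi>1" and I2: "\<And>k. ltl_sat H k \<psi>2 \<Longrightarrow> ltl_sat G k \<psi>2"
    using Release by auto
  show ?case using Release.prems(3) I1 I2 by (simp only: ltl_sat.simps) blast
qed auto

lemma freq_or: "\<forall>N. \<exists>n\<ge>N. A (n::nat) \<or> B n \<Longrightarrow> (\<forall>N. \<exists>n\<ge>N. A n) \<or> (\<forall>N. \<exists>n\<ge>N. B n)"
proof (rule ccontr)
  assume a: "\<forall>N. \<exists>n\<ge>N. A n \<or> B n" and "\<not> ((\<forall>N. \<exists>n\<ge>N. A n) \<or> (\<forall>N. \<exists>n\<ge>N. B n))"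
  then obtain N1 N2 where n1: "\<forall>n\<ge>N1. \<not> A n" and n2: "\<forall>n\<ge>N2. \<not> B n" by auto
  obtain n where "n \<ge> max N1 N2" "A n \<or> B n" using a by blast
  then have "n \<ge> N1" "n \<ge> N2" "A n \<or> B n" by auto
  then show False using n1 n2 by blast
qed

lemma freq_ex: "\<forall>N. \<exists>n\<ge>(N::nat). \<exists>k<(m::nat). Q n k \<Longrightarrow> \<exists>k<m. \<forall>N. \<exists>n\<ge>N. Q n k"
proof (induction m)
  case 0 then show ?case by auto
next
  case (Suc m)
  have "\<forall>N. \<exists>n\<ge>N. (\<exists>k<m. Q n k) \<or> Q n m"
  proof
    fix N obtain n k where "n\<ge>N" "k<Suc m" "Q n k" using Suc.prems by blast
    then show "\<exists>n\<ge>N. (\<exists>k<m. Q n k) \<or> Q n m" by (intro exI[of _ n]) (auto simp: less_Suc_eq)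
  qed
  then have "(\<forall>N. \<exists>n\<ge>N. \<exists>k<m. Q n k) \<or> (\<forall>N. \<exists>n\<ge>N. Q n m)"
    using freq_or[of "\<lambda>n. \<exists>k<m. Q n k" "\<lambda>n. Q n m"] by blast
  then show ?case
  proof
    assume "\<forall>N. \<exists>n\<ge>N. \<exists>k<m. Q n k"
    then obtain k where "k<m" "\<forall>N. \<exists>n\<ge>N. Q n k" using Suc.IH by blast
    then show ?thesis by (intro exI[of _ k]) auto
  next
    assume "\<forall>N. \<exists>n\<ge>N. Q n m"
    then show ?thesis by (intro exI[of _ m]) auto
  qed
qed

lemma limit_lemma:
  fixes H :: "nat \<Rightarrow> nat \<Rightarrow> 'a set"
  assumes "only_X_R \<psi>" "imp_height \<psi> \<le> 1"
    and sub: "\<forall>n i. L i \<subseteq> H n i" and ev: "\<forall>i. \<exists>N. \<forall>n\<ge>N. H n i = L i"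
    and "\<forall>N. \<exists>n\<ge>N. ltl_sat (H n) i \<psi>"
  shows "ltl_sat L i \<psi>"
  using assms(1,2,5)
proof (induction \<psi> arbitrary: i)
  case (Atom p)
  obtain N where N: "\<forall>n\<ge>N. H n i = L i" using ev by blast
  obtain n where "n \<ge> N" "p \<in> H n i" using Atom.prems(3) by auto
  then show ?case using N by auto
next
  case Bot then show ?case by auto
next
  case (Or \<psi>1 \<psi>2)
  have "(\<forall>N. \<exists>n\<ge>N. ltl_sat (H n) i \<psi>1) \<or> (\<forall>N. \<exists>n\<ge>N. ltl_sat (H n) i \<psi>2)"
    using freq_or[of "\<lambda>n. ltl_sat (H n) i \<psi>1" "\<lambda>n. ltl_sat (H n) i \<psi>2"] Or.prems(3) by simp
  then show ?case using Or by auto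
next
  case (And \<psi>1 \<psi>2)
  have "\<forall>N. \<exists>n\<ge>N. ltl_sat (H n) i \<psi>1" "\<forall>N. \<exists>n\<ge>N. ltl_sat (H n) i \<psi>2"
    using And.prems(3) by (simp, blast)+
  then show ?case using And by auto
next
  case (Imp \<psi>1 \<psi>2)
  have h: "imp_height \<psi>1 = 0" "imp_height \<psi>2 = 0" using Imp.prems by auto
  show ?case
  proof (cases "ltl_sat L i \<psi>1")
    case True
    then have "\<forall>n. ltl_sat (H n) i \<psi>1" using mono0[OF h(1)] sub by blast
    then have "\<forall>N. \<exists>n\<ge>N. ltl_sat (H n) i \<psi>2" using Imp.prems(3) by auto
    then show ?thesis using Imp.IH(2) Imp.prems h by simp
  qed simp
next
  case (Next \<psi>)
  then show ?case by simp
next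
  case (Until \<psi>1 \<psi>2) then show ?case by simp
next
  case (Release \<psi>1 \<psi>2)
  show ?case unfolding ltl_sat.simps
  proof (intro allI impI)
    fix j assume "i \<le> j"
    have "\<forall>N. \<exists>n\<ge>N. ltl_sat (H n) j \<psi>2 \<or> (\<exists>k<j. i \<le> k \<and> ltl_sat (H n) k \<psi>1)"
    proof
      fix N obtain n where "n \<ge> N" "ltl_sat (H n) i (Release \<psi>1 \<psi>2)" using Release.prems(3) by blast
      then show "\<exists>n\<ge>N. ltl_sat (H n) j \<psi>2 \<or> (\<exists>k<j. i \<le> k \<and> ltl_sat (H n) k \<psi>1)"
        using \<open>i \<le> j\<close> by (intro exI[of _ n]) auto
    qed
    then have "(\<forall>N. \<exists>n\<ge>N. ltl_sat (H n) j \<psi>2) \<or> (\<forall>N. \<exists>n\<ge>N. \<exists>k<j. i \<le> k \<and> ltl_sat (H n) k \<psi>1)"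
      using freq_or[of "\<lambda>n. ltl_sat (H n) j \<psi>2" "\<lambda>n. \<exists>k<j. i \<le> k \<and> ltl_sat (H n) k \<psi>1"] by blast
    then show "ltl_sat L j \<psi>2 \<or> (\<exists>k. i \<le> k \<and> k < j \<and> ltl_sat L k \<psi>1)"
    proof
      assume "\<forall>N. \<exists>n\<ge>N. ltl_sat (H n) j \<psi>2"
      then show ?thesis using Release.IH(2) Release.prems by simp
    next
      assume "\<forall>N. \<exists>n\<ge>N. \<exists>k<j. i \<le> k \<and> ltl_sat (H n) k \<psi>1"
      then obtain k where "k < j" "i \<le> k" "\<forall>N. \<exists>n\<ge>N. i \<le> k \<and> ltl_sat (H n) k \<psi>1"
        using freq_ex[where Q="\<lambda>n k. i \<le> k \<and> ltl_sat (H n) k \<psi>1"] by blast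
      moreover have "\<forall>N. \<exists>n\<ge>N. ltl_sat (H n) k \<psi>1" using calculation(3) by blast
      moreover have "ltl_sat L k \<psi>1" using Release.IH(1)[of k] Release.prems calculation(4) by auto
      ultimately show ?thesis using \<open>i \<le> k\<close> by blast
    qed
  qed
qed



definition gcand :: "('a interp \<Rightarrow> bool) \<Rightarrow> nat \<Rightarrow> 'a interp \<Rightarrow> 'a interp \<Rightarrow> bool" where
  "gcand P i H H' = (P H' \<and> (\<forall>k. H' k \<subseteq> H k) \<and> (\<forall>k<i. H' k = H k))"

definition gstep :: "('a interp \<Rightarrow> bool) \<Rightarrow> nat \<Rightarrow> 'a interp \<Rightarrow> 'a interp" where
  "gstep P i H = (SOME H'. gcand P i H H' \<and> (\<forall>H''. gcand P i H H'' \<longrightarrow> card (H' i) \<le> card (H'' i)))"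

primrec gseq :: "('a interp \<Rightarrow> bool) \<Rightarrow> 'a interp \<Rightarrow> nat \<Rightarrow> 'a interp" where
  "gseq P T 0 = T"
| "gseq P T (Suc i) = gstep P i (gseq P T i)"

lemma gstep_ok:
  assumes "P H"
  shows "gcand P i H (gstep P i H) \<and> (\<forall>H''. gcand P i H H'' \<longrightarrow> card (gstep P i H i) \<le> card (H'' i))"
proof -
  have "gcand P i H H" using assms by (simp add: gcand_def)
  then have "\<exists>H'. gcand P i H H' \<and> (\<forall>H''. gcand P i H H'' \<longrightarrow> card (H' i) \<le> card (H'' i))"
    by (rule ex_has_least_nat[where m="\<lambda>H'. card (H' i)"])
  then show ?thesis unfolding gstep_def by (rule someI_ex)
qed

lemma greedy:
  fixes T :: "'a::finite interp"
  assumes PT: "P T"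
    and lim: "\<And>H L. (\<forall>n::nat. P (H n)) \<Longrightarrow> (\<forall>n i. L i \<subseteq> H n i) \<Longrightarrow> (\<forall>i. \<exists>N. \<forall>n\<ge>N. H n i = L i) \<Longrightarrow> P L"
  shows "\<exists>u. P u \<and> \<not>(\<exists>H. strictly_below H u \<and> P H)"
proof -
  define S where "S = gseq P T"
  have PS: "P (S n)" for n
    by (induction n) (auto simp: S_def PT dest: gstep_ok[unfolded gcand_def])
  have step: "gcand P n (S n) (S (Suc n)) \<and> (\<forall>H''. gcand P n (S n) H'' \<longrightarrow> card (S (Suc n) n) \<le> card (H'' n))" for n
    using gstep_ok[of P "S n" n] PS[of n] by (simp add: S_def)
  have desc: "S (Suc n) k \<subseteq> S n k" for n k using step[of n] by (simp add: gcand_def)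
  have agr: "k < n \<Longrightarrow> S (Suc n) k = S n k" for n k using step[of n] by (simp add: gcand_def)
  define L where "L i = S (Suc i) i" for i
  have stab: "n \<ge> Suc k \<Longrightarrow> S n k = L k" for n k
  proof (induction n rule: dec_induct)
    case base then show ?case by (simp add: L_def)
  next
    case (step m) then show ?case using agr[of k m] by simp
  qed
  have mono: "m \<le> n \<Longrightarrow> S n k \<subseteq> S m k" for m n k
  proof (induction n rule: dec_induct)
    case base then show ?case by simp
  next
    case (step m') then show ?case using desc[of m' k] by blast
  qed
  have sub: "L i \<subseteq> S n i" for n i
  proof (cases "n \<le> Suc i")
    case True then show ?thesis using mono[of n "Suc i" i] by (simp add: L_def)
  next
    case False then show ?thesis using stab[of i n] by simp
  qed
  have PL: "P L"
    using lim[of S L] PS sub stab by blast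
  have "\<not>(\<exists>H. strictly_below H L \<and> P H)"
  proof
    assume "\<exists>H. strictly_below H L \<and> P H"
    then obtain H where HL: "\<forall>i. H i \<subseteq> L i" "H \<noteq> L" and PH: "P H"
      by (auto simp: strictly_below_def)
    then have "\<exists>i. H i \<noteq> L i" by auto
    then obtain i where i: "H i \<noteq> L i" and lt: "\<forall>k<i. H k = L k"
      using exists_least_iff[of "\<lambda>i. H i \<noteq> L i"] by auto
    have "gcand P i (S i) H"
      unfolding gcand_def
    proof (intro conjI allI impI)
      show "P H" by (rule PH)
      fix k show "H k \<subseteq> S i k" using HL(1) sub by blast
    next
      fix k assume "k < i"
      then show "H k = S i k" using lt stab[of k i] by simp
    qed
    then have "card (L i) \<le> card (H i)" using step[of i] by (simp add: L_def)
    moreover have "H i \<subset> L i" using HL(1) i by blast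
    then have "card (H i) < card (L i)" by (simp add: psubset_card_mono)
    ultimately show False by simp
  qed
  then show ?thesis using PL by blast
qed



definition occ :: "'a interp \<Rightarrow> 'a set \<Rightarrow> bool" where "occ v b = (\<exists>k. v k = b)"
definition fo :: "'a interp \<Rightarrow> 'a set \<Rightarrow> nat" where "fo v b = (LEAST k. v k = b)"
definition bef :: "'a interp \<Rightarrow> 'a set \<Rightarrow> 'a set \<Rightarrow> bool" where
  "bef v a b = (\<exists>k. v k = a \<and> (\<forall>k'<k. v k' \<noteq> b))"
definition abst :: "'a interp \<Rightarrow> 'a set \<times> 'a set \<times> ('a set \<Rightarrow> 'a set \<Rightarrow> bool)" where
  "abst v = (v 0, v 1, bef v)"

definition pv :: "'a set \<Rightarrow> 'a tform \<Rightarrow> bool" where "pv a \<psi> = ltl_sat (\<lambda>_. a) 0 \<psi>"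

lemma prop_sat: "temp_depth \<psi> = 0 \<Longrightarrow> ltl_sat v i \<psi> = pv (v i) \<psi>"
  unfolding pv_def by (induction \<psi>) auto

lemma until_abs:
  "(\<exists>j. B (v j) \<and> (\<forall>k<j. A (v k))) = (\<exists>a. B a \<and> bef v a a \<and> (\<forall>b. b \<noteq> a \<longrightarrow> bef v b a \<longrightarrow> A b))"
proof
  assume "\<exists>j. B (v j) \<and> (\<forall>k<j. A (v k))"
  then obtain j where j: "B (v j)" "\<forall>k<j. A (v k)" by blast
  show "\<exists>a. B a \<and> bef v a a \<and> (\<forall>b. b \<noteq> a \<longrightarrow> bef v b a \<longrightarrow> A b)"
  proof (intro exI conjI allI impI)
    show "B (v j)" by (rule j(1))
    show "bef v (v j) (v j)" unfolding bef_def
      using LeastI[of "\<lambda>k. v k = v j" j] not_less_Least[of _ "\<lambda>k. v k = v j"] by blast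
    fix b assume "b \<noteq> v j" "bef v b (v j)"
    then obtain k where k: "v k = b" "\<forall>k'<k. v k' \<noteq> v j" unfolding bef_def by blast
    have "\<not> j < k" using k(2) by blast
    moreover have "j \<noteq> k" using k(1) \<open>b \<noteq> v j\<close> by blast
    ultimately have "k < j" by simp
    then show "A b" using j(2) k(1) by blast
  qed
next
  assume "\<exists>a. B a \<and> bef v a a \<and> (\<forall>b. b \<noteq> a \<longrightarrow> bef v b a \<longrightarrow> A b)"
  then obtain a where a: "B a" "bef v a a" "\<forall>b. b \<noteq> a \<longrightarrow> bef v b a \<longrightarrow> A b" by blast
  then have ex: "\<exists>j. v j = a" unfolding bef_def by blast
  define j where "j = (LEAST j. v j = a)"
  have vj: "v j = a" unfolding j_def by (rule LeastI_ex[OF ex])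
  have lt: "k < j \<Longrightarrow> v k \<noteq> a" for k using not_less_Least[of k "\<lambda>j. v j = a"] unfolding j_def by blast
  show "\<exists>j. B (v j) \<and> (\<forall>k<j. A (v k))"
  proof (intro exI conjI allI impI)
    show "B (v j)" using vj a(1) by simp
    fix k assume "k < j"
    have "bef v (v k) a" unfolding bef_def using lt \<open>k < j\<close> by (intro exI[of _ k]) auto
    then show "A (v k)" using a(3) lt[OF \<open>k < j\<close>] by simp
  qed
qed

lemma abst_inv:
  "temp_depth \<phi> \<le> 1 \<Longrightarrow> abst v = abst w \<Longrightarrow> ltl_sat v 0 \<phi> = ltl_sat w 0 \<phi>"
proof (induction \<phi>)
  case (Atom x) then show ?case by (simp add: abst_def)
next
  case (Next \<psi>)
  then have "temp_depth \<psi> = 0" by simp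
  then show ?case using Next.prems by (simp add: prop_sat abst_def)
next
  case (Until \<psi>1 \<psi>2)
  then have d: "temp_depth \<psi>1 = 0" "temp_depth \<psi>2 = 0" by auto
  have "ltl_sat u 0 (Until \<psi>1 \<psi>2) = (\<exists>a. pv a \<psi>2 \<and> bef u a a \<and> (\<forall>b. b \<noteq> a \<longrightarrow> bef u b a \<longrightarrow> pv b \<psi>1))" for u
    using until_abs[of "\<lambda>a. pv a \<psi>2" u "\<lambda>a. pv a \<psi>1"] by (simp add: prop_sat[OF d(1)] prop_sat[OF d(2)])
  then show ?case using Until.prems by (simp add: abst_def)
next
  case (Release \<psi>1 \<psi>2)
  then have d: "temp_depth \<psi>1 = 0" "temp_depth \<psi>2 = 0" by auto
  have "ltl_sat u 0 (Release \<psi>1 \<psi>2) = (\<not>(\<exists>a. \<not> pv a \<psi>2 \<and> bef u a a \<and> (\<forall>b. b \<noteq> a \<longrightarrow> bef u b a \<longrightarrow> \<not> pv b \<psi>1)))" for u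
  proof -
    have "ltl_sat u 0 (Release \<psi>1 \<psi>2) = (\<not>(\<exists>j. \<not> pv (u j) \<psi>2 \<and> (\<forall>k<j. \<not> pv (u k) \<psi>1)))"
      by (simp add: prop_sat[OF d(1)] prop_sat[OF d(2)])
    then show ?thesis using until_abs[of "\<lambda>a. \<not> pv a \<psi>2" u "\<lambda>a. \<not> pv a \<psi>1"] by simp
  qed
  then show ?case using Release.prems by (simp add: abst_def)
qed auto



lemma fo_occ: "occ v b \<Longrightarrow> v (fo v b) = b"
  unfolding occ_def fo_def by (rule LeastI_ex)

lemma fo_le: "v k = b \<Longrightarrow> fo v b \<le> k"
  unfolding fo_def by (rule Least_le)

lemma fo_lt: "k < fo v b \<Longrightarrow> v k \<noteq> b"
  unfolding fo_def by (rule not_less_Least)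

lemma fo_eq: "v p = b \<Longrightarrow> (\<forall>k<p. v k \<noteq> b) \<Longrightarrow> fo v b = p"
  unfolding fo_def by (rule Least_equality) (auto simp: not_less[symmetric])

lemma occI: "v k = b \<Longrightarrow> occ v b" unfolding occ_def by blast

lemma bef_char: "bef v a b = (occ v a \<and> (occ v b \<longrightarrow> fo v a \<le> fo v b))"
proof
  assume "bef v a b"
  then obtain k where k: "v k = a" "\<forall>k'<k. v k' \<noteq> b" unfolding bef_def by blast
  have "occ v a" using k(1) by (rule occI)
  moreover have "fo v a \<le> fo v b" if "occ v b"
  proof -
    have "\<not> fo v b < k" using k(2) fo_occ[OF that] by blast
    then show ?thesis using fo_le[of v k a] k(1) by simp
  qed
  ultimately show "occ v a \<and> (occ v b \<longrightarrow> fo v a \<le> fo v b)" by blast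
next
  assume a: "occ v a \<and> (occ v b \<longrightarrow> fo v a \<le> fo v b)"
  show "bef v a b" unfolding bef_def
  proof (intro exI conjI allI impI)
    show "v (fo v a) = a" using a fo_occ by blast
    fix k' assume k': "k' < fo v a"
    show "v k' \<noteq> b"
    proof
      assume "v k' = b"
      then have "occ v b" "fo v b \<le> k'" using occI fo_le by blast+
      then show False using a k' by simp
    qed
  qed
qed

lemma abst_eq:
  "abst u = abst v \<longleftrightarrow> u 0 = v 0 \<and> u 1 = v 1 \<and> (\<forall>a. occ u a = occ v a) \<and>
     (\<forall>a b. occ u a \<longrightarrow> occ u b \<longrightarrow> (fo u a \<le> fo u b \<longleftrightarrow> fo v a \<le> fo v b))"
proof
  assume h: "abst u = abst v"
  then have b: "bef u = bef v" "u 0 = v 0" "u 1 = v 1" by (auto simp: abst_def)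
  have o: "occ u a = occ v a" for a using fun_cong[OF fun_cong[OF b(1), of a], of a] by (simp add: bef_char)
  have "fo u a \<le> fo u b \<longleftrightarrow> fo v a \<le> fo v b" if "occ u a" "occ u b" for a b
    using fun_cong[OF fun_cong[OF b(1), of a], of b] that o by (simp add: bef_char)
  then show "u 0 = v 0 \<and> u 1 = v 1 \<and> (\<forall>a. occ u a = occ v a) \<and>
     (\<forall>a b. occ u a \<longrightarrow> occ u b \<longrightarrow> (fo u a \<le> fo u b \<longleftrightarrow> fo v a \<le> fo v b))" using b o by blast
next
  assume h: "u 0 = v 0 \<and> u 1 = v 1 \<and> (\<forall>a. occ u a = occ v a) \<and>
     (\<forall>a b. occ u a \<longrightarrow> occ u b \<longrightarrow> (fo u a \<le> fo u b \<longleftrightarrow> fo v a \<le> fo v b))"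
  have "bef u a b = bef v a b" for a b using h by (auto simp: bef_char)
  then have "bef u = bef v" by (intro ext)
  then show "abst u = abst v" using h by (simp add: abst_def)
qed

lemma occ_cls: "abst u = abst v \<Longrightarrow> occ u a = occ v a"
  by (simp add: abst_eq)

lemma ord_cls: "abst u = abst v \<Longrightarrow> occ u a \<Longrightarrow> occ u b \<Longrightarrow> (fo u a \<le> fo u b \<longleftrightarrow> fo v a \<le> fo v b)"
  by (simp add: abst_eq)

lemma ord_cls_lt: "abst u = abst v \<Longrightarrow> occ u a \<Longrightarrow> occ u b \<Longrightarrow> (fo u a < fo u b \<longleftrightarrow> fo v a < fo v b)"
  using ord_cls[of u v b a] by (simp add: not_le[symmetric])

lemma fo_inj: "occ v a \<Longrightarrow> occ v b \<Longrightarrow> fo v a = fo v b \<Longrightarrow> a = b"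
  using fo_occ by metis



lemma class_min:
  fixes w :: "'a::finite interp"
  shows "\<exists>u. (\<forall>i. u i \<subseteq> w i) \<and> abst u = abst w \<and> (\<forall>u'. (\<forall>i. u' i \<subseteq> u i) \<longrightarrow> abst u' = abst u \<longrightarrow> u' = u)"
proof -
  define Oc where "Oc = {b. occ w b}"
  have finOc: "finite Oc" by simp
  define S where "S = {v. (\<forall>i. v i \<subseteq> w i) \<and> abst v = abst w}"
  have "w \<in> S" by (simp add: S_def)
  then obtain us where usS: "us \<in> S" and usmin: "\<forall>v. v \<in> S \<longrightarrow> (\<Sum>b\<in>Oc. fo us b) \<le> (\<Sum>b\<in>Oc. fo v b)"
    using ex_has_least_nat[of "\<lambda>v. v \<in> S" w "\<lambda>v. \<Sum>b\<in>Oc. fo v b"] by blast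
  have us_sub: "us i \<subseteq> w i" for i using usS by (simp add: S_def)
  have us_abs: "abst us = abst w" using usS by (simp add: S_def)
  define Av where "Av j = {c. (\<exists>k<j. us k = c) \<and> c \<subseteq> us j}" for j
  define fstp where "fstp j = (\<forall>k<j. us k \<noteq> us j)" for j
  define u where "u j = (if fstp j then us j else (SOME c. c \<in> Av j \<and> (\<forall>c'\<in>Av j. card c \<le> card c')))" for j
  have F1: "u j \<in> Av j \<and> (\<forall>c'\<in>Av j. card (u j) \<le> card c')" if nf: "\<not> fstp j" for j
  proof -
    have "us j \<in> Av j" using nf by (auto simp: fstp_def Av_def)
    then have "\<exists>c. c \<in> Av j \<and> (\<forall>c'. c' \<in> Av j \<longrightarrow> card c \<le> card c')"
      by (rule ex_has_least_nat[where m=card])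
    then have "\<exists>c. c \<in> Av j \<and> (\<forall>c'\<in>Av j. card c \<le> card c')" by blast
    then have "(SOME c. c \<in> Av j \<and> (\<forall>c'\<in>Av j. card c \<le> card c')) \<in> Av j \<and>
       (\<forall>c'\<in>Av j. card (SOME c. c \<in> Av j \<and> (\<forall>c'\<in>Av j. card c \<le> card c')) \<le> card c')"
      by (rule someI_ex)
    then show ?thesis using nf by (simp add: u_def)
  qed
  have u_sub_us: "u j \<subseteq> us j" for j
    using F1[of j] by (cases "fstp j") (auto simp: u_def Av_def)
  have F2: "\<not> c \<subset> u j" if "\<not> fstp j" "c \<in> Av j" for j c
  proof
    assume "c \<subset> u j"
    then have "card c < card (u j)" by (simp add: psubset_card_mono)
    then show False using F1[OF that(1)] that(2) by auto
  qed
  have G1: "\<exists>k\<le>j. us k = u j" for j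
  proof (cases "fstp j")
    case True then show ?thesis by (auto simp: u_def)
  next
    case False
    then obtain k where "k < j" "us k = u j" using F1[OF False] by (auto simp: Av_def)
    then show ?thesis by (intro exI[of _ k]) simp
  qed
  have G2: "fstp j \<Longrightarrow> u j = us j" for j by (simp add: u_def)
  have fo_u: "fo u b = fo us b \<and> occ u b" if "occ us b" for b
  proof -
    define p where "p = fo us b"
    have usp: "us p = b" using fo_occ[OF that] by (simp add: p_def)
    have fp: "fstp p" unfolding fstp_def using fo_lt[of _ us b] usp by (auto simp: p_def)
    have up: "u p = b" using G2[OF fp] usp by simp
    have "\<forall>k<p. u k \<noteq> b"
    proof (intro allI impI)
      fix k assume "k < p"
      obtain k' where "k' \<le> k" "us k' = u k" using G1 by blast
      then show "u k \<noteq> b" using fo_lt[of k' us b] \<open>k < p\<close> by (auto simp: p_def)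
    qed
    then have "fo u b = p" using fo_eq[of u p b] up by blast
    then show ?thesis using up occI[of u p b] by (simp add: p_def)
  qed
  have occ_u: "occ u b = occ us b" for b
  proof
    assume "occ u b"
    then obtain k where "u k = b" unfolding occ_def by blast
    then show "occ us b" using G1[of k] occI by metis
  qed (use fo_u in blast)
  have u0: "u 0 = us 0" using G2 by (simp add: fstp_def)
  have u1: "u 1 = us 1"
  proof (cases "fstp 1")
    case True then show ?thesis using G2 by simp
  next
    case False
    then have "us 0 = us 1" by (simp add: fstp_def)
    moreover have "u 1 = us 0" using F1[OF False] by (auto simp: Av_def)
    ultimately show ?thesis by simp
  qed
  have u_us: "abst u = abst us"
    unfolding abst_eq using u0 u1 occ_u fo_u by auto
  have u_abs: "abst u = abst w" using u_us us_abs by simp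
  have u_sub: "u i \<subseteq> w i" for i using u_sub_us us_sub by blast
  have Ou: "occ u b \<longleftrightarrow> b \<in> Oc" for b using occ_cls[OF u_abs] by (simp add: Oc_def)
  have fo_u': "b \<in> Oc \<Longrightarrow> fo u b = fo us b" for b using fo_u occ_u Ou by blast
  have minimal: "u' = u" if sub': "\<forall>i. u' i \<subseteq> u i" and ab': "abst u' = abst u" for u'
  proof -
    have Ou': "occ u' b \<longleftrightarrow> b \<in> Oc" for b using occ_cls[OF ab'] Ou by simp
    define D where "D = {a\<in>Oc. fo u' a \<noteq> fo u a}"
    show ?thesis
    proof (cases "D = {}")
      case True
      then have eqfo: "b \<in> Oc \<Longrightarrow> fo u' b = fo u b" for b by (auto simp: D_def)
      show ?thesis
      proof
        fix j
        define b where "b = u' j"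
        have bO: "b \<in> Oc" using Ou' occI[of u' j b] by (simp add: b_def)
        have fob: "fo u b \<le> j" using eqfo[OF bO] fo_le[of u' j b] by (simp add: b_def)
        show "u' j = u j"
        proof (cases "fstp j")
          case True
          define a where "a = u j"
          have "fo us a = j" using fo_eq[of us j a] True G2[OF True] by (auto simp: fstp_def a_def)
          moreover have aO: "a \<in> Oc" using Ou occI[of u j a] by (simp add: a_def)
          ultimately have "fo u' a = j" using eqfo fo_u' by simp
          then show ?thesis using fo_occ[of u' a] Ou' aO by (simp add: a_def)
        next
          case False
          have bsub: "b \<subseteq> u j" using sub' by (simp add: b_def)
          show ?thesis
          proof (cases "fo u b = j")
            case True then show ?thesis using fo_occ[of u b] Ou bO by (simp add: b_def)
          next
            case False2: False
            then have lt: "fo us b < j" using fob fo_u'[OF bO] by simp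
            have "b \<in> Av j" unfolding Av_def
              using lt fo_occ[of us b] occ_u Ou bO bsub u_sub_us[of j] by auto
            then have "\<not> b \<subset> u j" using F2[OF False] by blast
            then show ?thesis using bsub by (auto simp: b_def)
          qed
        qed
      qed
    next
      case False
      then obtain a where aD: "a \<in> D" and amin: "\<forall>d. d \<in> D \<longrightarrow> fo u a \<le> fo u d"
        using ex_has_least_nat[of "\<lambda>d. d \<in> D" _ "fo u"] by blast
      define J where "J = fo u a"
      have aO: "a \<in> Oc" using aD by (simp add: D_def)
      have G3: "fo u' b = fo u b" if "b \<in> Oc" "fo u b < J" for b
        using amin that by (force simp: D_def J_def)
      show ?thesis
      proof (cases "fo u' a < J")
        case True
        define u'' where "u'' j = (if j < J then u' j else us j)" for j
        have "J \<noteq> 1"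
        proof
          assume "J = 1"
          then have "fo u' a = 0" using True by simp
          then have "u' 0 = a" using fo_occ[of u' a] Ou' aO by simp
          moreover have "u' 0 = u 0" using ab' by (simp add: abst_def)
          ultimately have "fo u a = 0" using fo_le[of u 0 a] by simp
          then show False using \<open>J = 1\<close> by (simp add: J_def)
        qed
        then have J1: "1 < J" using True by simp
        have X: "fo u'' b = fo u' b" if "b \<in> Oc" "fo u' b < J" for b
        proof -
          have "u'' (fo u' b) = b" using that fo_occ[of u' b] Ou' by (simp add: u''_def)
          moreover have "\<forall>k<fo u' b. u'' k \<noteq> b" using that fo_lt[of _ u' b] by (simp add: u''_def)
          ultimately show ?thesis using fo_eq by blast
        qed
        have Ybig: "J \<le> fo u b" if "b \<in> Oc" "\<not> fo u' b < J" for b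
          using G3 that by force
        have Y: "fo u'' b = fo u b" if "b \<in> Oc" "\<not> fo u' b < J" for b
        proof -
          have fb: "fo u b = fo us b" using fo_u' that(1) by simp
          have "u'' (fo us b) = b" using Ybig[OF that] fb fo_occ[of us b] occ_u Ou that(1) by (simp add: u''_def)
          moreover have "\<forall>k<fo us b. u'' k \<noteq> b"
          proof (intro allI impI)
            fix k assume "k < fo us b"
            then show "u'' k \<noteq> b" using fo_lt[of k us b] fo_lt[of k u' b] that(2) by (auto simp: u''_def)
          qed
          ultimately show ?thesis using fo_eq fb by metis
        qed
        have occ'': "occ u'' b \<longleftrightarrow> b \<in> Oc" for b
        proof
          assume "occ u'' b"
          then obtain k where "u'' k = b" unfolding occ_def by blast
          then show "b \<in> Oc" using occI[of u' k b] occI[of us k b] Ou' occ_u Ou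
            by (cases "k < J") (auto simp: u''_def)
        next
          assume bO: "b \<in> Oc"
          show "occ u'' b"
          proof (cases "fo u' b < J")
            case True
            then show ?thesis using X[OF bO True] fo_occ[of u' b] Ou' bO occI by (metis (no_types, lifting) u''_def)
          next
            case False
            have "u'' (fo us b) = b" using Ybig[OF bO False] fo_u'[OF bO] fo_occ[of us b] occ_u Ou bO by (simp add: u''_def)
            then show ?thesis by (rule occI)
          qed
        qed
        have w0: "u' 0 = w 0" "u' 1 = w 1" using ab' u_abs by (auto simp: abst_def)
        have ab'w: "abst u' = abst w" using ab' u_abs by simp
        have ord'': "fo u'' b \<le> fo u'' c \<longleftrightarrow> fo w b \<le> fo w c" if bO: "b \<in> Oc" and cO: "c \<in> Oc" for b c
        proof -
          have ou'b: "occ u' b" "occ u' c" using Ou' bO cO by auto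
          have oub: "occ u b" "occ u c" using Ou bO cO by auto
          show ?thesis
          proof (cases "fo u' b < J"; cases "fo u' c < J")
            assume "fo u' b < J" "fo u' c < J"
            then show ?thesis using X bO cO ord_cls[OF ab'w ou'b] by simp
          next
            assume h: "fo u' b < J" "\<not> fo u' c < J"
            then have "fo u' b \<le> fo u' c" by simp
            then have "fo w b \<le> fo w c" using ord_cls[OF ab'w ou'b] by simp
            moreover have "fo u'' b \<le> fo u'' c" using X[OF bO h(1)] Y[OF cO h(2)] Ybig[OF cO h(2)] h(1) by simp
            ultimately show ?thesis by simp
          next
            assume h: "\<not> fo u' b < J" "fo u' c < J"
            then have "fo u' c < fo u' b" by simp
            then have "\<not> fo w b \<le> fo w c" using ord_cls_lt[OF ab'w ou'b(2) ou'b(1)] by simp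
            moreover have "\<not> fo u'' b \<le> fo u'' c" using X[OF cO h(2)] Y[OF bO h(1)] Ybig[OF bO h(1)] h(2) by simp
            ultimately show ?thesis by simp
          next
            assume h: "\<not> fo u' b < J" "\<not> fo u' c < J"
            then show ?thesis using Y bO cO ord_cls[OF u_abs oub] by simp
          qed
        qed
        have "abst u'' = abst w"
          unfolding abst_eq
        proof (intro conjI allI impI)
          show "u'' 0 = w 0" "u'' 1 = w 1" using w0 J1 by (auto simp: u''_def)
          fix b show "occ u'' b = occ w b" using occ'' by (simp add: Oc_def)
        next
          fix b c assume "occ u'' b" "occ u'' c"
          then show "fo u'' b \<le> fo u'' c \<longleftrightarrow> fo w b \<le> fo w c" using ord'' occ'' by simp
        qed
        moreover have "u'' i \<subseteq> w i" for i using sub' u_sub us_sub by (auto simp: u''_def)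
        ultimately have "u'' \<in> S" by (simp add: S_def)
        have "(\<Sum>b\<in>Oc. fo u'' b) < (\<Sum>b\<in>Oc. fo us b)"
        proof (rule sum_strict_mono_ex1[OF finOc])
          show "\<forall>b\<in>Oc. fo u'' b \<le> fo us b"
          proof
            fix b assume bO: "b \<in> Oc"
            show "fo u'' b \<le> fo us b"
            proof (cases "fo u' b < J")
              case True
              then show ?thesis using X[OF bO True] fo_u'[OF bO] G3[OF bO] by (cases "fo u b < J") auto
            next
              case False then show ?thesis using Y[OF bO False] fo_u'[OF bO] by simp
            qed
          qed
          show "\<exists>b\<in>Oc. fo u'' b < fo us b"
            using X[OF aO True] True fo_u'[OF aO] aO unfolding J_def by (intro bexI[of _ a]) auto
        qed
        then show ?thesis using usmin \<open>u'' \<in> S\<close> by fastforce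
      next
        case False
        have aJ: "fo u' a \<noteq> J" using aD by (simp add: D_def J_def)
        then have gt: "J < fo u' a" using False by simp
        define c where "c = u' J"
        have uJ: "u J = a" using fo_occ[of u a] Ou aO by (simp add: J_def)
        have csub: "c \<subseteq> a" using sub' uJ by (auto simp: c_def)
        have cO: "c \<in> Oc" using Ou' occI[of u' J c] by (simp add: c_def)
        have foc': "fo u' c \<le> J" using fo_le[of u' J c] by (simp add: c_def)
        have cna: "c \<noteq> a" using foc' gt by auto
        have "fo u' c < fo u' a" using foc' gt by simp
        then have fuc: "fo u c < J" using ord_cls_lt[OF ab'] Ou' cO aO by (simp add: J_def)
        have cpa: "c \<subset> a" using csub cna by blast
        define E where "E = {d\<in>Oc. J \<le> fo u d \<and> fo u d < fo u' d \<and> c \<subset> d}"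
        have aE: "a \<in> E" using aO gt cpa by (simp add: E_def J_def)
        have finE: "finite E" by simp
        define m where "m = Max (fo u ` E)"
        have "m \<in> fo u ` E" unfolding m_def using aE finE by (intro Max_in) auto
        then obtain d where dE: "d \<in> E" and dm: "fo u d = m" by blast
        have dmax: "fo u e \<le> fo u d" if "e \<in> E" for e using that finE dm by (simp add: m_def)
        define p where "p = fo u' d"
        have dO: "d \<in> Oc" using dE by (simp add: E_def)
        have u'p: "u' p = d" using fo_occ[of u' d] Ou' dO by (simp add: p_def)
        have cup: "c \<subset> u p" using sub' u'p dE by (auto simp: E_def)
        show ?thesis
        proof (cases "fstp p")
          case True
          define e where "e = u p"
          have ue: "us p = e" using G2[OF True] by (simp add: e_def)
          have "fo us e = p" using fo_eq[of us p e] True ue by (auto simp: fstp_def)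
          moreover have eO: "e \<in> Oc" using Ou occI[of u p e] by (simp add: e_def)
          ultimately have fue: "fo u e = p" using fo_u' by simp
          have dlt: "fo u d < fo u e" using dE fue by (simp add: E_def p_def)
          then have "fo u' d < fo u' e" using ord_cls_lt[OF u_abs[symmetric, folded ab'] ] Ou dO eO
            ord_cls_lt[of u u' d e] ab' by simp
          then have "e \<in> E" using eO dE dlt cup fue by (auto simp: E_def e_def p_def)
          then show ?thesis using dmax dlt by fastforce
        next
          case False
          have "c \<in> Av p" unfolding Av_def
          proof (intro CollectI conjI)
            have "fo us c < p" using fuc fo_u'[OF cO] dE by (simp add: E_def p_def)
            then show "\<exists>k<p. us k = c" using fo_occ[of us c] occ_u Ou cO by blast
            show "c \<subseteq> us p" using cup u_sub_us[of p] by blast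
          qed
          then show ?thesis using F2[OF False] cup by blast
        qed
      qed
    qed
  qed
  show ?thesis using u_sub u_abs minimal by blast
qed


lemma union_min:
  fixes A :: "('a::finite set \<times> 'a set \<times> ('a set \<Rightarrow> 'a set \<Rightarrow> bool)) set"
  assumes "finite A" "abst T \<in> A"
  shows "\<exists>u. (\<forall>i. u i \<subseteq> T i) \<and> abst u \<in> A \<and> (\<forall>u'. strictly_below u' u \<longrightarrow> abst u' \<notin> A)"
  using assms
proof (induction "card A" arbitrary: A T rule: less_induct)
  case less
  obtain u0 where u0: "\<forall>i. u0 i \<subseteq> T i" "abst u0 = abst T"
      "\<forall>u'. (\<forall>i. u' i \<subseteq> u0 i) \<longrightarrow> abst u' = abst u0 \<longrightarrow> u' = u0"
    using class_min[of T] by blast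
  show ?case
  proof (cases "\<exists>u1. strictly_below u1 u0 \<and> abst u1 \<in> A")
    case False then show ?thesis using u0 less.prems by (intro exI[of _ u0]) auto
  next
    case True
    then obtain u1 where u1: "strictly_below u1 u0" "abst u1 \<in> A" by blast
    have ne: "abst u1 \<noteq> abst T"
    proof
      assume "abst u1 = abst T"
      then have "u1 = u0" using u0 u1(1) by (auto simp: strictly_below_def)
      then show False using u1(1) by (simp add: strictly_below_def)
    qed
    define A' where "A' = A - {abst T}"
    have "card A' < card A" unfolding A'_def using less.prems by (intro card_Diff1_less) auto
    moreover have "finite A'" "abst u1 \<in> A'" using less.prems u1 ne by (auto simp: A'_def)
    ultimately obtain u where u: "\<forall>i. u i \<subseteq> u1 i" "abst u \<in> A'"
        "\<forall>u'. strictly_below u' u \<longrightarrow> abst u' \<notin> A'"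
      using less.hyps by blast
    have u1u0: "\<forall>i. u1 i \<subseteq> u0 i" using u1(1) by (simp add: strictly_below_def)
    show ?thesis
    proof (intro exI conjI allI impI)
      fix i show "u i \<subseteq> T i" using u(1) u1u0 u0(1) by blast
    next
      show "abst u \<in> A" using u(2) by (simp add: A'_def)
    next
      fix u' assume su: "strictly_below u' u"
      show "abst u' \<notin> A"
      proof
        assume "abst u' \<in> A"
        then have "abst u' = abst T" using u(3) su by (auto simp: A'_def)
        moreover have "\<forall>i. u' i \<subseteq> u0 i" using su u(1) u1u0 unfolding strictly_below_def by blast
        ultimately have "u' = u0" using u0 by simp
        have "u1 = u0"
        proof
          fix i
          have "u0 i \<subseteq> u i" using su \<open>u' = u0\<close> unfolding strictly_below_def by blast
          then show "u1 i = u0 i" using u(1) u1u0 by blast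
        qed
        then show False using u1(1) by (simp add: strictly_below_def)
      qed
    qed
  qed
qed

theorem mainTheorem10:
  fixes dummy :: "'a::finite"
  shows "(\<forall>\<phi>::'a tform. \<phi> \<in> THT1_XR \<and> ltl_satisfiable \<phi> \<longrightarrow> (\<exists>T. minimal_ltl_model T \<phi>))
       \<and> (\<forall>\<phi>::'a tform. \<phi> \<in> THT_1 \<and> ltl_satisfiable \<phi> \<longrightarrow> (\<exists>T. minimal_ltl_model T \<phi>))"
proof (intro conjI allI impI)
  fix \<phi> :: "'a tform"
  assume h: "\<phi> \<in> THT1_XR \<and> ltl_satisfiable \<phi>"
  then obtain T :: "'a interp" where T: "ltl_model T \<phi>" by (auto simp: ltl_satisfiable_def)
  have xr: "only_X_R \<phi>" "imp_height \<phi> \<le> 1" using h by (auto simp: THT1_XR_def)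
  have "\<exists>u. ltl_model u \<phi> \<and> \<not>(\<exists>H. strictly_below H u \<and> ltl_model H \<phi>)"
  proof (rule greedy[where P="\<lambda>v. ltl_model v \<phi>", OF T])
    fix H :: "nat \<Rightarrow> 'a interp" and L
    assume a: "\<forall>n. ltl_model (H n) \<phi>" "\<forall>n i. L i \<subseteq> H n i" "\<forall>i. \<exists>N. \<forall>n\<ge>N. H n i = L i"
    have "\<forall>N. \<exists>n\<ge>N. ltl_sat (H n) 0 \<phi>"
    proof
      fix N show "\<exists>n\<ge>N. ltl_sat (H n) 0 \<phi>" using a(1) by (intro exI[of _ N]) (simp add: ltl_model_def)
    qed
    then have "ltl_sat L 0 \<phi>" using limit_lemma[OF xr a(2) a(3)] by blast
    then show "ltl_model L \<phi>" by (simp add: ltl_model_def)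
  qed
  then show "\<exists>T. minimal_ltl_model T \<phi>" by (auto simp: minimal_ltl_model_def)
next
  fix \<phi> :: "'a tform"
  assume h: "\<phi> \<in> THT_1 \<and> ltl_satisfiable \<phi>"
  then obtain T :: "'a interp" where T: "ltl_model T \<phi>" by (auto simp: ltl_satisfiable_def)
  have d: "temp_depth \<phi> \<le> 1" using h by (simp add: THT_1_def)
  define A where "A = abst ` {v. ltl_model v \<phi>}"
  have "finite A" by (rule finite_subset[OF subset_UNIV finite_UNIV])
  moreover have "abst T \<in> A" using T unfolding A_def by blast
  ultimately obtain u where u: "abst u \<in> A" "\<forall>u'. strictly_below u' u \<longrightarrow> abst u' \<notin> A"
    using union_min[of A T] by blast
  obtain v where v: "ltl_model v \<phi>" "abst v = abst u" using u(1) unfolding A_def by (metis (mono_tags, lifting) imageE mem_Collect_eq)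
  have "ltl_model u \<phi>" using v abst_inv[OF d, of v u] by (simp add: ltl_model_def)
  moreover have "\<not>(\<exists>H. strictly_below H u \<and> ltl_model H \<phi>)"
  proof
    assume "\<exists>H. strictly_below H u \<and> ltl_model H \<phi>"
    then obtain H where "strictly_below H u" "ltl_model H \<phi>" by blast
    moreover then have "abst H \<in> A" unfolding A_def by blast
    ultimately show False using u(2) by blast
  qed
  ultimately show "\<exists>T. minimal_ltl_model T \<phi>" by (auto simp: minimal_ltl_model_def)
qed


end
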